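(* Let $1<p<\infty$. Every interval preserving operator $T$ on $\ell^p$ (with the coordinatewise order) has a non-trivial closed invariant subspace which is an ideal.
   Context: On $\ell^p$, $x\ge0$ means all coordinates are real and nonnegative; order intervals are $[0,x]=\{y:0\le y\le x\}$. A positive operator $T$ is interval preserving if $T[0,x]=[0,Tx]$ for every $x\ge0$. An ideal is a linear subspace $M$ such that $|x|\le|y|$ coordinatewise and $y\in M$ imply $x\in M$. Non-trivial means different from $\{0\}$ and $\ell^p$. *)

theory Defs
  imports "HOL-Analysis.Analysis"
begin

definition lp :: "real \<Rightarrow> (nat \<Rightarrow> complex) set" where
  "lp p = {x. summable (\<lambda>n. norm (x n) powr p)}"

definition lp_norm :: "real \<Rightarrow> (nat \<Rightarrow> complex) \<Rightarrow> real" where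
  "lp_norm p x = (\<Sum>n. norm (x n) powr p) powr (1 / p)"

definition nonneg :: "(nat \<Rightarrow> complex) \<Rightarrow> bool" where
  "nonneg x \<longleftrightarrow> (\<forall>n. Im (x n) = 0 \<and> 0 \<le> Re (x n))"

definition seq_le :: "(nat \<Rightarrow> complex) \<Rightarrow> (nat \<Rightarrow> complex) \<Rightarrow> bool" where
  "seq_le x y \<longleftrightarrow> nonneg (\<lambda>n. y n - x n)"

definition order_interval :: "real \<Rightarrow> (nat \<Rightarrow> complex) \<Rightarrow> (nat \<Rightarrow> complex) set" where
  "order_interval p x = {y \<in> lp p. seq_le (\<lambda>n. 0) y \<and> seq_le y x}"

definition lp_operator :: "real \<Rightarrow> ((nat \<Rightarrow> complex) \<Rightarrow> (nat \<Rightarrow> complex)) \<Rightarrow> bool" where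
  "lp_operator p T \<longleftrightarrow>
     (\<forall>x\<in>lp p. T x \<in> lp p) \<and>
     (\<forall>x\<in>lp p. \<forall>y\<in>lp p. T (\<lambda>n. x n + y n) = (\<lambda>n. T x n + T y n)) \<and>
     (\<forall>x\<in>lp p. \<forall>c::complex. T (\<lambda>n. c * x n) = (\<lambda>n. c * T x n)) \<and>
     (\<exists>C. \<forall>x\<in>lp p. lp_norm p (T x) \<le> C * lp_norm p x)"

definition positive_op :: "real \<Rightarrow> ((nat \<Rightarrow> complex) \<Rightarrow> (nat \<Rightarrow> complex)) \<Rightarrow> bool" where
  "positive_op p T \<longleftrightarrow> (\<forall>x\<in>lp p. nonneg x \<longrightarrow> nonneg (T x))"

definition interval_preserving :: "real \<Rightarrow> ((nat \<Rightarrow> complex) \<Rightarrow> (nat \<Rightarrow> complex)) \<Rightarrow> bool" where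
  "interval_preserving p T \<longleftrightarrow>
     positive_op p T \<and>
     (\<forall>x\<in>lp p. nonneg x \<longrightarrow> T ` order_interval p x = order_interval p (T x))"

definition lp_subspace :: "real \<Rightarrow> (nat \<Rightarrow> complex) set \<Rightarrow> bool" where
  "lp_subspace p M \<longleftrightarrow> M \<subseteq> lp p \<and> (\<lambda>n. 0) \<in> M \<and>
     (\<forall>x\<in>M. \<forall>y\<in>M. (\<lambda>n. x n + y n) \<in> M) \<and> (\<forall>x\<in>M. \<forall>c::complex. (\<lambda>n. c * x n) \<in> M)"

definition lp_ideal :: "real \<Rightarrow> (nat \<Rightarrow> complex) set \<Rightarrow> bool" where
  "lp_ideal p M \<longleftrightarrow> lp_subspace p M \<and>
     (\<forall>x y. y \<in> M \<and> (\<forall>n. norm (x n) \<le> norm (y n)) \<longrightarrow> x \<in> M)"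

definition lp_closed :: "real \<Rightarrow> (nat \<Rightarrow> complex) set \<Rightarrow> bool" where
  "lp_closed p M \<longleftrightarrow>
     (\<forall>s x. (\<forall>k. s k \<in> M) \<and> x \<in> lp p \<and> (\<lambda>k. lp_norm p (\<lambda>n. s k n - x n)) \<longlonglongrightarrow> 0 \<longrightarrow> x \<in> M)"

end

theory Submission
  imports Defs
begin

lemma lp_comp:
  assumes "y \<in> lp p" "0 \<le> p" "\<And>n. norm (x n) \<le> norm (y n)"
  shows "x \<in> lp p"
proof -
  have "summable (\<lambda>n. norm (y n) powr p)" using assms(1) by (simp add: lp_def)
  moreover have "\<And>n. norm (norm (x n) powr p) \<le> norm (y n) powr p"
    using assms by (simp add: powr_mono2)
  ultimately show ?thesis unfolding lp_def
    by (auto intro: summable_comparison_test[where g="\<lambda>n. norm (y n) powr p"])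
qed

lemma lp_finite:
  assumes "finite N" "\<And>n. n \<notin> N \<Longrightarrow> x n = 0"
  shows "x \<in> lp p"
  unfolding lp_def using assms by (auto intro!: summable_finite[of N])

lemma lp_scale:
  assumes "x \<in> lp p"
  shows "(\<lambda>n. c * x n) \<in> lp p"
proof -
  have "summable (\<lambda>n. norm c powr p * norm (x n) powr p)"
    using assms by (simp add: lp_def summable_mult)
  thus ?thesis unfolding lp_def by (simp add: norm_mult powr_mult)
qed

lemma lp_add:
  assumes "x \<in> lp p" "y \<in> lp p" "0 \<le> p"
  shows "(\<lambda>n. x n + y n) \<in> lp p"
proof -
  have s: "summable (\<lambda>n. 2 powr p * (norm (x n) powr p + norm (y n) powr p))"
    using assms by (simp add: lp_def summable_mult summable_add)
  have "norm (norm (x n + y n) powr p) \<le> 2 powr p * (norm (x n) powr p + norm (y n) powr p)" for n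
  proof -
    let ?m = "max (norm (x n)) (norm (y n))"
    have "norm (x n + y n) \<le> 2 * ?m"
      using norm_triangle_ineq[of "x n" "y n"] by linarith
    hence "norm (x n + y n) powr p \<le> (2 * ?m) powr p" using assms(3) by (simp add: powr_mono2)
    also have "\<dots> = 2 powr p * ?m powr p" by (simp add: powr_mult)
    also have "?m powr p \<le> norm (x n) powr p + norm (y n) powr p"
      by (cases "norm (x n) \<le> norm (y n)") (auto simp: max_def)
    hence "2 powr p * ?m powr p \<le> 2 powr p * (norm (x n) powr p + norm (y n) powr p)" by simp
    finally show ?thesis by simp
  qed
  hence "summable (\<lambda>n. norm (x n + y n) powr p)"
    by (intro summable_comparison_test[OF _ s]) auto
  thus ?thesis unfolding lp_def by simp
qed

lemma lp_coord:
  assumes "z \<in> lp p" "0 < p"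
  shows "norm (z m) \<le> lp_norm p z"
proof -
  have s: "summable (\<lambda>n. norm (z n) powr p)" using assms by (simp add: lp_def)
  have "norm (z m) powr p \<le> (\<Sum>n. norm (z n) powr p)"
    using sum_le_suminf[OF s, of "{m}"] by simp
  hence "(norm (z m) powr p) powr (1/p) \<le> (\<Sum>n. norm (z n) powr p) powr (1/p)"
    using assms by (simp add: powr_mono2)
  thus ?thesis using assms by (simp add: lp_norm_def powr_powr)
qed

lemma lp_tail:
  assumes "x \<in> lp p" "0 < p"
  shows "(\<lambda>N. lp_norm p (\<lambda>n. x n - (if n < N then x n else 0))) \<longlonglongrightarrow> 0"
proof -
  define f where "f n = norm (x n) powr p" for n
  have s: "summable f" using assms unfolding lp_def f_def by simp
  have eq: "(\<lambda>n. norm (x n - (if n < N then x n else 0)) powr p) = (\<lambda>n. f n - (if n < N then f n else 0))" for N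
    by (auto simp: f_def)
  have s2: "summable (\<lambda>n. if n < N then f n else 0)" for N
    by (rule summable_finite[of "{..<N}"]) auto
  have suminf_eq: "(\<Sum>n. f n - (if n < N then f n else 0)) = suminf f - (\<Sum>n<N. f n)" for N
  proof -
    have "(\<Sum>n. (if n < N then f n else 0)) = (\<Sum>n<N. f n)"
      by (subst suminf_finite[of "{..<N}"]) auto
    thus ?thesis using suminf_diff[OF s s2[of N]] by simp
  qed
  have t: "(\<lambda>N. suminf f - (\<Sum>n<N. f n)) \<longlonglongrightarrow> 0"
    using tendsto_diff[OF tendsto_const summable_LIMSEQ[OF s], of "suminf f"] by simp
  have nn: "0 \<le> suminf f - (\<Sum>n<N. f n)" for N
    using sum_le_suminf[OF s, of "{..<N}"] by (simp add: f_def)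
  have "(\<lambda>N. (suminf f - (\<Sum>n<N. f n)) powr (1/p)) \<longlonglongrightarrow> 0"
    by (rule tendsto_zero_powrI[OF t tendsto_const]) (use nn assms in auto)
  thus ?thesis unfolding lp_norm_def eq suminf_eq .
qed


definition ee :: "nat \<Rightarrow> nat \<Rightarrow> complex" where "ee j = (\<lambda>n. if n = j then 1 else 0)"

definition II :: "real \<Rightarrow> nat set \<Rightarrow> (nat \<Rightarrow> complex) set" where
  "II p A = {x \<in> lp p. \<forall>n. n \<notin> A \<longrightarrow> x n = 0}"

lemma op_add: "lp_operator p T \<Longrightarrow> x \<in> lp p \<Longrightarrow> y \<in> lp p \<Longrightarrow> T (\<lambda>n. x n + y n) = (\<lambda>n. T x n + T y n)"
  unfolding lp_operator_def by blast
lemma op_scale: "lp_operator p T \<Longrightarrow> x \<in> lp p \<Longrightarrow> T (\<lambda>n. c * x n) = (\<lambda>n. c * T x n)"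
  unfolding lp_operator_def by blast
lemma op_lp: "lp_operator p T \<Longrightarrow> x \<in> lp p \<Longrightarrow> T x \<in> lp p"
  unfolding lp_operator_def by blast

lemma ee_lp: "ee j \<in> lp p"
  by (rule lp_finite[of "{j}"]) (auto simp: ee_def)

lemma T_zero:
  assumes "lp_operator p T"
  shows "T (\<lambda>n. 0) = (\<lambda>n. 0)"
proof -
  have z: "(\<lambda>n. 0) \<in> lp p" by (rule lp_finite[of "{}"]) auto
  have "T (\<lambda>n. 0 * (0::complex)) = (\<lambda>n. 0 * T (\<lambda>n. 0) n)"
    using op_scale[OF assms z, of 0] by simp
  thus ?thesis by simp
qed

lemma T_trunc:
  assumes "lp_operator p T" "x \<in> lp p" "0 \<le> p"
  shows "T (\<lambda>n. if n < N then x n else 0) = (\<lambda>m. \<Sum>j<N. x j * T (ee j) m)"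
proof (induction N)
  case 0
  then show ?case using T_zero[OF assms(1)] by simp
next
  case (Suc N)
  have eq: "(\<lambda>n. if n < Suc N then x n else 0) = (\<lambda>n. (if n < N then x n else 0) + x N * ee N n)"
    by (auto simp: ee_def fun_eq_iff less_Suc_eq)
  have l1: "(\<lambda>n. if n < N then x n else 0) \<in> lp p" by (rule lp_finite[of "{..<N}"]) auto
  have l2: "(\<lambda>n. x N * ee N n) \<in> lp p" by (rule lp_scale[OF ee_lp])
  have "T (\<lambda>n. (if n < N then x n else 0) + x N * ee N n)
      = (\<lambda>n. T (\<lambda>n. if n < N then x n else 0) n + T (\<lambda>n. x N * ee N n) n)"
    using op_add[OF assms(1) l1 l2] .
  also have "T (\<lambda>n. x N * ee N n) = (\<lambda>n. x N * T (ee N) n)"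
    using op_scale[OF assms(1) ee_lp] .
  finally show ?case unfolding eq Suc by simp
qed

lemma T_diff:
  assumes "lp_operator p T" "x \<in> lp p" "y \<in> lp p" "0 \<le> p"
  shows "T (\<lambda>n. x n - y n) = (\<lambda>n. T x n - T y n)"
proof -
  have y': "(\<lambda>n. (-1) * y n) \<in> lp p" by (rule lp_scale[OF assms(3)])
  have "T (\<lambda>n. x n + (\<lambda>n. (-1) * y n) n) = (\<lambda>n. T x n + T (\<lambda>n. (-1) * y n) n)"
    using op_add[OF assms(1,2) y'] .
  also have "T (\<lambda>n. (-1) * y n) = (\<lambda>n. (-1) * T y n)"
    using op_scale[OF assms(1,3)] .
  finally show ?thesis by simp
qed

lemma T_inv:
  assumes op: "lp_operator p T" and p: "0 < p"
    and A: "\<And>j m. j \<in> A \<Longrightarrow> T (ee j) m \<noteq> 0 \<Longrightarrow> m \<in> A"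
    and x: "x \<in> II p A" and m: "m \<notin> A"
  shows "T x m = 0"
proof -
  obtain C where C: "\<And>z. z \<in> lp p \<Longrightarrow> lp_norm p (T z) \<le> C * lp_norm p z"
    using op unfolding lp_operator_def by blast
  have xl: "x \<in> lp p" using x by (simp add: II_def)
  define t where "t N = (\<lambda>n. if n < N then x n else 0)" for N
  have tl: "t N \<in> lp p" for N unfolding t_def by (rule lp_finite[of "{..<N}"]) auto
  have t0: "T (t N) m = 0" for N
  proof -
    have "x j * T (ee j) m = 0" for j
    proof (cases "x j = 0")
      case False
      hence "j \<in> A" using x by (auto simp: II_def)
      hence "T (ee j) m = 0" using A m by blast
      thus ?thesis by simp
    qed simp
    thus ?thesis unfolding t_def T_trunc[OF op xl less_imp_le[OF p]] by (simp add: sum.neutral)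
  qed
  have dl: "(\<lambda>n. x n - t N n) \<in> lp p" for N
    using lp_add[OF xl lp_scale[OF tl[of N], of "-1"]] p by simp
  have bd: "norm (T x m) \<le> C * lp_norm p (\<lambda>n. x n - t N n)" for N
  proof -
    have "norm (T x m) = norm (T (\<lambda>n. x n - t N n) m)"
      using T_diff[OF op xl tl less_imp_le[OF p]] t0 by simp
    also have "\<dots> \<le> lp_norm p (T (\<lambda>n. x n - t N n))"
      by (rule lp_coord[OF _ p]) (use op dl in \<open>auto simp: lp_operator_def\<close>)
    also have "\<dots> \<le> C * lp_norm p (\<lambda>n. x n - t N n)" by (rule C[OF dl])
    finally show ?thesis .
  qed
  have lim: "(\<lambda>N. C * lp_norm p (\<lambda>n. x n - t N n)) \<longlonglongrightarrow> 0"
    using tendsto_mult_right_zero[OF lp_tail[OF xl p], of C] unfolding t_def by simp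
  have "norm (T x m) \<le> 0"
    by (rule tendsto_le[OF trivial_limit_sequentially lim tendsto_const]) (use bd in auto)
  thus ?thesis by simp
qed


lemma gen:
  assumes op: "lp_operator p T" and p: "0 < p"
    and A: "\<And>j m. j \<in> A \<Longrightarrow> T (ee j) m \<noteq> 0 \<Longrightarrow> m \<in> A"
    and ne: "a \<in> A" and nu: "b \<notin> A"
  shows "\<exists>M. lp_ideal p M \<and> lp_closed p M \<and> (\<forall>x\<in>M. T x \<in> M) \<and>
             M \<noteq> {\<lambda>n. 0} \<and> M \<noteq> lp p"
proof (intro exI conjI)
  let ?M = "II p A"
  have p0: "0 \<le> p" using p by simp
  show "lp_ideal p ?M"
    unfolding lp_ideal_def lp_subspace_def
  proof (intro conjI allI impI ballI)
    show "?M \<subseteq> lp p" by (auto simp: II_def)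
    show "(\<lambda>n. 0) \<in> ?M" unfolding II_def by (auto intro: lp_finite[of "{}"])
    fix x y assume "x \<in> ?M" "y \<in> ?M"
    thus "(\<lambda>n. x n + y n) \<in> ?M" unfolding II_def using lp_add[OF _ _ p0] by auto
  next
    fix x c assume "x \<in> ?M"
    thus "(\<lambda>n. c * x n) \<in> ?M" unfolding II_def using lp_scale by auto
  next
    fix x y :: "nat \<Rightarrow> complex" assume h: "y \<in> ?M \<and> (\<forall>n. norm (x n) \<le> norm (y n))"
    hence "x \<in> lp p" using lp_comp[OF _ p0] by (auto simp: II_def)
    moreover have "\<forall>n. n \<notin> A \<longrightarrow> x n = 0"
    proof (intro allI impI)
      fix n assume "n \<notin> A"
      hence "y n = 0" using h by (auto simp: II_def)
      moreover have "norm (x n) \<le> norm (y n)" using h by blast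
      ultimately show "x n = 0" by simp
    qed
    ultimately show "x \<in> ?M" by (simp add: II_def)
  qed
  show "lp_closed p ?M"
    unfolding lp_closed_def
  proof (intro allI impI)
    fix s x assume h: "(\<forall>k. s k \<in> ?M) \<and> x \<in> lp p \<and> (\<lambda>k. lp_norm p (\<lambda>n. s k n - x n)) \<longlonglongrightarrow> 0"
    have "x n = 0" if n: "n \<notin> A" for n
    proof -
      have bd: "norm (x n) \<le> lp_norm p (\<lambda>i. s k i - x i)" for k
      proof -
        have sk: "s k \<in> lp p" "s k n = 0" using h n by (auto simp: II_def)
        have "(\<lambda>i. s k i - x i) \<in> lp p"
          using lp_add[OF sk(1) lp_scale[of x p "-1"] p0] h by simp
        from lp_coord[OF this p, of n] sk(2) show ?thesis by simp
      qed
      have "norm (x n) \<le> 0"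
        by (rule tendsto_le[OF trivial_limit_sequentially _ tendsto_const]) (use h bd in auto)
      thus ?thesis by simp
    qed
    thus "x \<in> ?M" using h by (simp add: II_def)
  qed
  show "\<forall>x\<in>?M. T x \<in> ?M"
  proof
    fix x assume x: "x \<in> ?M"
    hence "T x \<in> lp p" using op_lp[OF op] by (simp add: II_def)
    thus "T x \<in> ?M" using T_inv[OF op p A x] by (auto simp: II_def)
  qed
  have "ee a \<in> ?M" using ee_lp ne by (auto simp: II_def ee_def)
  moreover have "ee a \<noteq> (\<lambda>n. 0)" by (auto simp: ee_def fun_eq_iff)
  ultimately show "?M \<noteq> {\<lambda>n. 0}" by auto
  have "ee b \<notin> ?M" using nu by (auto simp: II_def ee_def)
  thus "?M \<noteq> lp p" using ee_lp by auto
qed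

lemma rank_one:
  assumes op: "lp_operator p T" and ip: "interval_preserving p T"
    and m: "T (ee j) m \<noteq> 0" and m': "T (ee j) m' \<noteq> 0"
  shows "m = m'"
proof (rule ccontr)
  assume ne: "m \<noteq> m'"
  let ?u = "T (ee j)"
  have enn: "nonneg (ee j)" by (auto simp: nonneg_def ee_def)
  have unn: "nonneg ?u" using ip ee_lp enn by (auto simp: interval_preserving_def positive_op_def)
  define y where "y = (\<lambda>n. if n = m then ?u m else 0)"
  have "y \<in> lp p" unfolding y_def by (rule lp_finite[of "{m}"]) auto
  moreover have "seq_le (\<lambda>n. 0) y" using unn by (auto simp: seq_le_def nonneg_def y_def)
  moreover have "seq_le y ?u" using unn by (auto simp: seq_le_def nonneg_def y_def)
  ultimately have "y \<in> order_interval p ?u" by (simp add: order_interval_def)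
  also have "order_interval p ?u = T ` order_interval p (ee j)"
    using ip ee_lp enn by (auto simp: interval_preserving_def)
  finally obtain w where w: "w \<in> order_interval p (ee j)" "y = T w" by auto
  have w1: "nonneg w" "nonneg (\<lambda>n. ee j n - w n)"
    using w by (auto simp: order_interval_def seq_le_def)
  define t where "t = Re (w j)"
  have "w = (\<lambda>n. complex_of_real t * ee j n)"
  proof
    fix n
    show "w n = complex_of_real t * ee j n"
    proof (cases "n = j")
      case True
      thus ?thesis using w1 by (auto simp: nonneg_def t_def ee_def complex_eq_iff)
    next
      case False
      have "Im (w n) = 0" "0 \<le> Re (w n)" "0 \<le> - Re (w n)"
        using w1 False by (auto simp: nonneg_def ee_def dest: spec[of _ n])
      thus ?thesis using False by (auto simp: ee_def complex_eq_iff)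
    qed
  qed
  hence Tw: "T w = (\<lambda>n. complex_of_real t * ?u n)" using op_scale[OF op ee_lp] by simp
  have "y m' = 0" using ne by (simp add: y_def)
  hence "complex_of_real t * ?u m' = 0" using w(2) Tw by simp
  hence "t = 0" using m' by simp
  hence "y m = 0" using w(2) Tw by simp
  thus False using m by (simp add: y_def)
qed


lemma periodic:
  assumes "(f ^^ P) x = x"
  shows "(f ^^ n) x = (f ^^ (n mod P)) x"
proof -
  have q: "(f ^^ (P * q)) x = x" for q
  proof (induction q)
    case (Suc q)
    have "(f ^^ (P * Suc q)) x = (f ^^ P) ((f ^^ (P * q)) x)"
      by (simp add: funpow_add)
    thus ?case using Suc assms by simp
  qed simp
  have "(f ^^ n) x = (f ^^ (n mod P)) ((f ^^ (P * (n div P))) x)"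
    by (metis add.commute div_mult_mod_eq funpow_add mult.commute o_apply)
  thus ?thesis using q by simp
qed

theorem corollary3p7:
  fixes p :: real and T :: "(nat \<Rightarrow> complex) \<Rightarrow> (nat \<Rightarrow> complex)"
  assumes "1 < p"
    and "lp_operator p T"
    and "interval_preserving p T"
  shows "\<exists>M. lp_ideal p M \<and> lp_closed p M \<and> (\<forall>x\<in>M. T x \<in> M) \<and>
             M \<noteq> {\<lambda>n. 0} \<and> M \<noteq> lp p"
proof -
  have p: "0 < p" using assms(1) by simp
  note op = assms(2) and ip = assms(3)
  show ?thesis
  proof (cases "\<exists>j. \<forall>m. T (ee j) m = 0")
    case True
    then obtain j where j: "\<And>m. T (ee j) m = 0" by blast
    show ?thesis by (rule gen[OF op p, of "{j}" j "Suc j"]) (use j in auto)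
  next
    case False
    define f where "f j = (SOME m. T (ee j) m \<noteq> 0)" for j
    have f1: "T (ee j) (f j) \<noteq> 0" for j
      using False unfolding f_def by (metis (mono_tags, lifting) someI_ex)
    have f2: "T (ee j) m \<noteq> 0 \<Longrightarrow> m = f j" for j m
      using rank_one[OF op ip _ f1] by blast
    define A where "A = range (\<lambda>k. (f ^^ Suc k) 0)"
    have Acl: "m \<in> A" if jA: "j \<in> A" and jm: "T (ee j) m \<noteq> 0" for j m
    proof -
      obtain k where "j = (f ^^ Suc k) 0" using jA unfolding A_def by blast
      hence "m = (f ^^ Suc (Suc k)) 0" using f2[OF jm] by simp
      thus ?thesis unfolding A_def by (rule range_eqI[of _ _ "Suc k"])
    qed
    have aA: "f 0 \<in> A" unfolding A_def by (rule range_eqI[of _ _ 0]) simp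
    have "\<exists>b. b \<notin> A"
    proof (rule ccontr)
      assume "\<not> (\<exists>b. b \<notin> A)"
      hence U: "A = UNIV" by auto
      have "(0::nat) \<in> A" using U by simp
      then obtain k where k0: "0 = (f ^^ Suc k) 0" unfolding A_def by (rule rangeE)
      have k: "(f ^^ Suc k) 0 = 0" using k0 by simp
      have "A \<subseteq> (\<lambda>i. (f ^^ i) 0) ` {..<Suc k}"
      proof
        fix x assume "x \<in> A"
        then obtain n where "x = (f ^^ n) 0" unfolding A_def by blast
        hence "x = (f ^^ (n mod Suc k)) 0" using periodic[OF k, of n] by simp
        thus "x \<in> (\<lambda>i. (f ^^ i) 0) ` {..<Suc k}" by (rule image_eqI) simp
      qed
      hence "finite A" by (rule finite_subset) simp
      thus False using U by simp
    qed
    then obtain b where "b \<notin> A" by blast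
    show ?thesis by (rule gen[OF op p _ aA \<open>b \<notin> A\<close>]) (rule Acl)
  qed
qed

end
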